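(* Let $G=(V,E)$ be an $n$-node graph, $\mathcal{C}$ a clustering of $G$ produced by $\mathbf{cluster}(G,e)$ for some integer $e \ge 1$, and $d, m$ positive integers (with $d$ possibly $\infty$). Let $\mathcal{S}$ be the output of $\mathbf{createStrips}(G, \mathcal{C}, d, m)$. Then the set of edges lying on paths in $\mathcal{S}$ contains only $O(n)$ edges that are incident on a clustered node (with the constant in $O(\cdot)$ independent of $G, e, d, m$).
   Context: $G$ is unweighted and undirected. For each pair of nodes $u,v$ a shortest path $\rho_G(u,v)$ is fixed, the choice being consistent and such that any two chosen shortest paths intersect on at most one (contiguous) subpath. The procedure $\mathbf{cluster}(G,e)$: initialize $\mathcal{C} = \emptyset$, unmark all nodes; while there is an unmarked node $u$ with at least $e-1$ unmarked neighbors, let $C$ be $u$ together with any $e-1$ of its unmarked neighbors, mark all nodes of $C$, add $C$ to $\mathcal{C}$; return $\mathcal{C}$. Elements of $\mathcal{C}$ are clusters; a node is clustered if it lies in some cluster, unclustered otherwise. The procedure $\mathbf{createStrips}(G,\mathcal{C},d,m)$: initialize $\mathcal{S}=\emptyset$; while there exist $u,v \in V$ such that (1) $\delta_G(u,v) \le d$, (2) $\rho_G(u,v)$ intersects (shares a node with) at most $m$ different paths in $\mathcal{S}$, and (3) $\rho_G(u,v)$ intersects exactly $m$ clusters that share no node with any path in $\mathcal{S}$, add $\rho_G(u,v)$ to $\mathcal{S}$; return $\mathcal{S}$. The paths in $\mathcal{S}$ are called strips. *)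

theory Defs
  imports Main "HOL-Library.Extended_Nat" "HOL-Library.Sublist"
begin

definition graph :: "nat set \<Rightarrow> nat set set \<Rightarrow> bool" where
  "graph V E \<longleftrightarrow> finite V \<and> (\<forall>ed\<in>E. \<exists>x y. ed = {x, y} \<and> x \<noteq> y \<and> x \<in> V \<and> y \<in> V)"

definition adj :: "nat set set \<Rightarrow> nat \<Rightarrow> nat \<Rightarrow> bool" where
  "adj E x y \<longleftrightarrow> {x, y} \<in> E \<and> x \<noteq> y"

definition nbrs :: "nat set \<Rightarrow> nat set set \<Rightarrow> nat \<Rightarrow> nat set" where
  "nbrs V E u = {v \<in> V. adj E u v}"

definition walk :: "nat set \<Rightarrow> nat set set \<Rightarrow> nat list \<Rightarrow> bool" where
  "walk V E p \<longleftrightarrow> p \<noteq> [] \<and> set p \<subseteq> V \<and> (\<forall>i. Suc i < length p \<longrightarrow> adj E (p ! i) (p ! Suc i))"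

definition walk_betw :: "nat set \<Rightarrow> nat set set \<Rightarrow> nat \<Rightarrow> nat \<Rightarrow> nat list \<Rightarrow> bool" where
  "walk_betw V E u v p \<longleftrightarrow> walk V E p \<and> hd p = u \<and> last p = v"

text \<open>Hop distance; \<infinity> if v is not reachable from u.\<close>
definition dist :: "nat set \<Rightarrow> nat set set \<Rightarrow> nat \<Rightarrow> nat \<Rightarrow> enat" where
  "dist V E u v = (INF p \<in> {p. walk_betw V E u v p}. enat (length p - 1))"

definition shortest_path_system ::
  "nat set \<Rightarrow> nat set set \<Rightarrow> (nat \<Rightarrow> nat \<Rightarrow> nat list) \<Rightarrow> bool" where
  "shortest_path_system V E \<rho> \<longleftrightarrow>
     (\<forall>u\<in>V. \<forall>v\<in>V. dist V E u v \<noteq> \<infinity> \<longrightarrow>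
        walk_betw V E u v (\<rho> u v) \<and> enat (length (\<rho> u v) - 1) = dist V E u v
        \<and> \<rho> v u = rev (\<rho> u v)) \<and>
     (\<forall>u\<in>V. \<forall>v\<in>V. \<forall>x\<in>V. \<forall>y\<in>V.
        dist V E u v \<noteq> \<infinity> \<longrightarrow> dist V E x y \<noteq> \<infinity> \<longrightarrow>
        (\<exists>q. set q = set (\<rho> u v) \<inter> set (\<rho> x y) \<and> sublist q (\<rho> u v)
              \<and> (sublist q (\<rho> x y) \<or> sublist (rev q) (\<rho> x y))))"

text \<open>Runs of cluster(G,e): a state is the current set of clusters; marked nodes are their union.\<close>
inductive cluster_reach :: "nat set \<Rightarrow> nat set set \<Rightarrow> nat \<Rightarrow> nat set set \<Rightarrow> bool"
  for V E e where
  init: "cluster_reach V E e {}"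
| step: "cluster_reach V E e Cs \<Longrightarrow> u \<in> V \<Longrightarrow> u \<notin> \<Union>Cs \<Longrightarrow>
         N \<subseteq> nbrs V E u - \<Union>Cs \<Longrightarrow> card N = e - 1 \<Longrightarrow> finite N \<Longrightarrow>
         cluster_reach V E e (insert (insert u N) Cs)"

definition cluster_out :: "nat set \<Rightarrow> nat set set \<Rightarrow> nat \<Rightarrow> nat set set \<Rightarrow> bool" where
  "cluster_out V E e Cs \<longleftrightarrow> cluster_reach V E e Cs \<and>
     \<not> (\<exists>u\<in>V. u \<notin> \<Union>Cs \<and> card (nbrs V E u - \<Union>Cs) \<ge> e - 1)"

definition strip_addable ::
  "nat set \<Rightarrow> nat set set \<Rightarrow> (nat \<Rightarrow> nat \<Rightarrow> nat list) \<Rightarrow> nat set set \<Rightarrow> enat \<Rightarrow> nat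
     \<Rightarrow> nat list set \<Rightarrow> nat \<Rightarrow> nat \<Rightarrow> bool" where
  "strip_addable V E \<rho> Cs d m S u v \<longleftrightarrow>
     u \<in> V \<and> v \<in> V \<and> dist V E u v \<noteq> \<infinity> \<and> dist V E u v \<le> d \<and>
     card {p \<in> S. set p \<inter> set (\<rho> u v) \<noteq> {}} \<le> m \<and>
     card {C \<in> Cs. C \<inter> set (\<rho> u v) \<noteq> {} \<and> (\<forall>p\<in>S. C \<inter> set p = {})} = m"

inductive strips_reach ::
  "nat set \<Rightarrow> nat set set \<Rightarrow> (nat \<Rightarrow> nat \<Rightarrow> nat list) \<Rightarrow> nat set set \<Rightarrow> enat \<Rightarrow> nat
     \<Rightarrow> nat list set \<Rightarrow> bool"
  for V E \<rho> Cs d m where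
  init: "strips_reach V E \<rho> Cs d m {}"
| step: "strips_reach V E \<rho> Cs d m S \<Longrightarrow> strip_addable V E \<rho> Cs d m S u v \<Longrightarrow>
         strips_reach V E \<rho> Cs d m (insert (\<rho> u v) S)"

definition strips_out ::
  "nat set \<Rightarrow> nat set set \<Rightarrow> (nat \<Rightarrow> nat \<Rightarrow> nat list) \<Rightarrow> nat set set \<Rightarrow> enat \<Rightarrow> nat
     \<Rightarrow> nat list set \<Rightarrow> bool" where
  "strips_out V E \<rho> Cs d m S \<longleftrightarrow> strips_reach V E \<rho> Cs d m S \<and>
     \<not> (\<exists>u v. strip_addable V E \<rho> Cs d m S u v)"

definition path_edges :: "nat list \<Rightarrow> nat set set" where
  "path_edges p = {{p ! i, p ! Suc i} | i. Suc i < length p}"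

end

theory Submission
  imports Defs
begin

lemma walk_succ: "walk V E p \<longleftrightarrow> p \<noteq> [] \<and> set p \<subseteq> V \<and> successively (adj E) p"
  by (simp add: walk_def successively_conv_nth)

lemma distinct_shortest:
  assumes "walk_betw V E u v p" "enat (length p - 1) = dist V E u v"
  shows "distinct p"
proof (rule ccontr)
  assume "\<not> distinct p"
  then obtain xs ys zs y where p: "p = xs@[y]@ys@[y]@zs" using not_distinct_decomp by blast
  let ?p' = "xs@[y]@zs"
  have w: "walk V E p" "hd p = u" "last p = v" using assms(1) by (auto simp: walk_betw_def)
  have "successively (adj E) p" using w(1) by (simp add: walk_succ)
  then have "successively (adj E) ?p'" using p by (auto simp: successively_append_iff successively_Cons)
  moreover have "set ?p' \<subseteq> V" using w(1) p by (auto simp: walk_def)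
  ultimately have "walk V E ?p'" by (simp add: walk_succ)
  moreover have "hd ?p' = u" using w(2) p by (cases xs) auto
  moreover have "last ?p' = v" using w(3) p by (cases zs) auto
  ultimately have "walk_betw V E u v ?p'" by (simp add: walk_betw_def)
  then have "dist V E u v \<le> enat (length ?p' - 1)" unfolding dist_def by (rule INF_lower[OF CollectI])
  with assms(2) have "enat (length p - 1) \<le> enat (length ?p' - 1)" by simp
  then have "length p - 1 \<le> length ?p' - 1" by simp
  then show False using p by simp
qed

lemma sublist_edge: "sublist q P \<Longrightarrow> Suc k < length q \<Longrightarrow> {q!k, q!Suc k} \<in> path_edges P"
proof -
  assume a: "sublist q P" "Suc k < length q"
  then obtain ps ss where P: "P = ps @ q @ ss" by (auto simp: sublist_def)
  have "P ! (length ps + k) = q ! k" "P ! Suc (length ps + k) = q ! Suc k"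
    using a(2) P by (auto simp: nth_append)
  moreover have "Suc (length ps + k) < length P" using P a(2) by simp
  ultimately show ?thesis unfolding path_edges_def by (metis (mono_tags, lifting) mem_Collect_eq)
qed

lemma sublist_rev_edge: "sublist (rev q) P \<Longrightarrow> Suc k < length q \<Longrightarrow> {q!k, q!Suc k} \<in> path_edges P"
proof -
  assume a: "sublist (rev q) P" "Suc k < length q"
  define k' where "k' = length q - 2 - k"
  have "Suc k' < length (rev q)" using a(2) by (simp add: k'_def)
  from sublist_edge[OF a(1) this] have "{rev q ! k', rev q ! Suc k'} \<in> path_edges P" .
  moreover have e1: "length q - Suc k' = Suc k" "length q - Suc (Suc k') = k"
    unfolding k'_def using a(2) by arith+
  moreover have "k' < length q" "Suc k' < length q" using a(2) by (simp_all add: k'_def)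
  ultimately have "rev q ! k' = q ! Suc k" "rev q ! Suc k' = q ! k" by (simp_all add: rev_nth)
  moreover note \<open>{rev q ! k', rev q ! Suc k'} \<in> path_edges P\<close>
  ultimately show ?thesis by (simp add: insert_commute)
qed

lemma pos_in_sublist:
  assumes "p = ps@q@ss" "distinct p" "i < length p" "p!i \<in> set q"
  shows "length ps \<le> i \<and> i < length ps + length q"
proof -
  obtain k where k: "k < length q" "q!k = p!i" using assms(4) by (metis in_set_conv_nth)
  have "p!(length ps + k) = q!k" using assms(1) k by (simp add: nth_append)
  moreover have "length ps + k < length p" using assms(1) k by simp
  ultimately have "i = length ps + k" using assms(2,3) k by (simp add: nth_eq_iff_index_eq)
  then show ?thesis using k by simp
qed

lemma key:
  assumes "distinct p" "sublist q p" "set q = set P \<inter> set p" "sublist q P \<or> sublist (rev q) P"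
    "i < j" "j < length p" "p!i \<in> set P" "p!j \<in> set P"
  shows "{p!i, p!Suc i} \<in> path_edges P"
proof -
  obtain ps ss where p: "p = ps@q@ss" using assms(2) by (auto simp: sublist_def)
  have "p!i \<in> set q" "p!j \<in> set q" using assms(3,5,6,7,8) by auto
  from pos_in_sublist[OF p assms(1) _ this(1)] pos_in_sublist[OF p assms(1) _ this(2)] assms(5,6)
  have b: "length ps \<le> i" "j < length ps + length q" by auto
  define k where "k = i - length ps"
  have sk: "Suc k < length q" using b assms(5) by (simp add: k_def)
  have "q!k = p!i" "q!Suc k = p!Suc i" using b assms(5) p by (auto simp: nth_append k_def Suc_diff_le)
  with sk assms(4) sublist_edge sublist_rev_edge show ?thesis by metis
qed

lemma step_count:
  fixes p :: "nat list" and S :: "nat list set"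
  assumes fin: "finite S" and dp: "distinct p"
  and inter: "\<forall>P\<in>S. \<exists>q. set q = set P \<inter> set p \<and> sublist q p \<and> (sublist q P \<or> sublist (rev q) P)"
  and mb: "card {P\<in>S. set P \<inter> set p \<noteq> {}} \<le> m"
  shows "card (path_edges p - (\<Union>P\<in>S. path_edges P)) \<le> card (set p - (\<Union>P\<in>S. set P)) + m"
proof -
  define A where "A = set p - (\<Union>P\<in>S. set P)"
  define Old where "Old = (\<Union>P\<in>S. path_edges P)"
  define e where "e i = {p!i, p!Suc i}" for i
  define I1 where "I1 = {i. Suc i < length p \<and> p!i \<in> A}"
  define I2 where "I2 = {i. Suc i < length p \<and> p!i \<in> (\<Union>P\<in>S. set P) \<and> e i \<notin> Old}"
  have sub: "path_edges p - Old \<subseteq> e ` (I1 \<union> I2)"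
  proof
    fix ed assume "ed \<in> path_edges p - Old"
    then obtain i where i: "Suc i < length p" "ed = e i" "e i \<notin> Old"
      by (auto simp: path_edges_def e_def)
    then have "p!i \<in> set p" by simp
    then have "i \<in> I1 \<union> I2" using i by (auto simp: I1_def I2_def A_def)
    then show "ed \<in> e ` (I1 \<union> I2)" using i by blast
  qed
  have finI1: "finite I1" by (rule finite_subset[of _ "{..<length p}"]) (auto simp: I1_def)
  have finI2: "finite I2" by (rule finite_subset[of _ "{..<length p}"]) (auto simp: I2_def)
  have "card (path_edges p - Old) \<le> card (e ` (I1 \<union> I2))"
    using sub finI1 finI2 by (intro card_mono) auto
  also have "\<dots> \<le> card (I1 \<union> I2)" using finI1 finI2 by (intro card_image_le) auto
  also have "\<dots> \<le> card I1 + card I2" by (rule card_Un_le)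
  finally have c0: "card (path_edges p - Old) \<le> card I1 + card I2" .
  have c1: "card I1 \<le> card A"
  proof (rule card_inj_on_le[of "nth p"])
    show "inj_on ((!) p) I1" using dp by (auto simp: inj_on_def I1_def nth_eq_iff_index_eq)
    show "(!) p ` I1 \<subseteq> A" by (auto simp: I1_def)
    show "finite A" by (simp add: A_def)
  qed
  define f where "f i = (SOME P. P \<in> S \<and> p!i \<in> set P)" for i
  have fI: "f i \<in> S \<and> p!i \<in> set (f i)" if "i \<in> I2" for i
  proof -
    have "\<exists>P. P \<in> S \<and> p!i \<in> set P" using that by (auto simp: I2_def)
    then show ?thesis unfolding f_def by (rule someI_ex)
  qed
  have c2: "card I2 \<le> card {P\<in>S. set P \<inter> set p \<noteq> {}}"
  proof (rule card_inj_on_le[of f])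
    show "inj_on f I2"
    proof (rule inj_onI, rule ccontr)
      fix i j assume ij: "i \<in> I2" "j \<in> I2" "f i = f j" "i \<noteq> j"
      have gen: "False" if "a \<in> I2" "b \<in> I2" "f a = f b" "a < b" for a b
      proof -
        define P where "P = f a"
        have PS: "P \<in> S" "p!a \<in> set P" "p!b \<in> set P" using fI[OF that(1)] fI[OF that(2)] that(3) P_def by auto
        obtain q where q: "set q = set P \<inter> set p" "sublist q p" "sublist q P \<or> sublist (rev q) P"
          using inter PS(1) by blast
        have "b < length p" using that by (auto simp: I2_def)
        from key[OF dp q(2) q(1) q(3) that(4) this PS(2,3)] have "e a \<in> Old"
          using PS(1) by (auto simp: e_def Old_def)
        then show False using that by (auto simp: I2_def)
      qed
      show False using ij gen by (metis linorder_neqE_nat)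
    qed
    show "f ` I2 \<subseteq> {P\<in>S. set P \<inter> set p \<noteq> {}}" using fI by (force simp: I2_def)
    show "finite {P\<in>S. set P \<inter> set p \<noteq> {}}" using fin by simp
  qed
  show ?thesis using c0 c1 c2 mb by (simp add: A_def Old_def)
qed

lemma cluster_disj:
  "cluster_reach V E e Cs \<Longrightarrow> \<forall>C1\<in>Cs. \<forall>C2\<in>Cs. C1 \<noteq> C2 \<longrightarrow> C1 \<inter> C2 = {}"
proof (induction rule: cluster_reach.induct)
  case init then show ?case by simp
next
  case (step Cs u N)
  have "insert u N \<inter> C = {}" if "C \<in> Cs" for C using step.hyps that by blast
  then show ?case using step.IH by blast
qed

lemma fresh_bound:
  assumes disj: "\<forall>C1\<in>Cs. \<forall>C2\<in>Cs. C1 \<noteq> C2 \<longrightarrow> C1 \<inter> C2 = {}"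
  shows "card {C\<in>Cs. C \<inter> set p \<noteq> {} \<and> (\<forall>P\<in>S. C \<inter> set P = {})} \<le> card (set p - (\<Union>P\<in>S. set P))"
proof -
  define F where "F = {C\<in>Cs. C \<inter> set p \<noteq> {} \<and> (\<forall>P\<in>S. C \<inter> set P = {})}"
  define g where "g C = (SOME x. x \<in> C \<inter> set p)" for C
  have gC: "g C \<in> C \<inter> set p" if "C \<in> F" for C
  proof -
    have "\<exists>x. x \<in> C \<inter> set p" using that by (auto simp: F_def)
    then show ?thesis unfolding g_def by (rule someI_ex)
  qed
  have "card F \<le> card (set p - (\<Union>P\<in>S. set P))"
  proof (rule card_inj_on_le[of g])
    show "inj_on g F"
    proof (rule inj_onI)
      fix C D assume "C \<in> F" "D \<in> F" "g C = g D"
      assume a: "C \<in> F" "D \<in> F" "g C = g D"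
      have "g C \<in> C" "g C \<in> D" using gC[OF a(1)] gC[OF a(2)] a(3) by auto
      moreover have "C \<in> Cs" "D \<in> Cs" using a by (auto simp: F_def)
      ultimately show "C = D" using disj by blast
    qed
    show "g ` F \<subseteq> set p - (\<Union>P\<in>S. set P)" using gC by (force simp: F_def)
    show "finite (set p - (\<Union>P\<in>S. set P))" by simp
  qed
  then show ?thesis by (simp add: F_def)
qed

lemma finite_path_edges: "finite (path_edges p)"
proof -
  have "path_edges p = (\<lambda>i. {p!i, p!Suc i}) ` {i. Suc i < length p}"
    by (auto simp: path_edges_def)
  moreover have "finite {i. Suc i < length p}" by (rule finite_subset[of _ "{..<length p}"]) auto
  ultimately show ?thesis by simp
qed

lemma strips_inv:
  assumes "strips_reach V E \<rho> Cs d m S" "shortest_path_system V E \<rho>"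
    "\<forall>C1\<in>Cs. \<forall>C2\<in>Cs. C1 \<noteq> C2 \<longrightarrow> C1 \<inter> C2 = {}"
  shows "finite S \<and> (\<forall>P\<in>S. \<exists>x\<in>V. \<exists>y\<in>V. dist V E x y \<noteq> \<infinity> \<and> P = \<rho> x y)
     \<and> card (\<Union>P\<in>S. path_edges P) \<le> 2 * card (\<Union>P\<in>S. set P)"
  using assms(1)
proof (induction rule: strips_reach.induct)
  case init then show ?case by simp
next
  case (step S u v)
  define p where "p = \<rho> u v"
  have ad: "u \<in> V" "v \<in> V" "dist V E u v \<noteq> \<infinity>"
    "card {P \<in> S. set P \<inter> set p \<noteq> {}} \<le> m"
    "card {C \<in> Cs. C \<inter> set p \<noteq> {} \<and> (\<forall>P\<in>S. C \<inter> set P = {})} = m"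
    using step.hyps(2) by (auto simp: strip_addable_def p_def)
  have sp: "walk_betw V E u v p" "enat (length p - 1) = dist V E u v"
    using assms(2) ad by (auto simp: shortest_path_system_def p_def)
  have dp: "distinct p" by (rule distinct_shortest[OF sp])
  have inter: "\<forall>P\<in>S. \<exists>q. set q = set P \<inter> set p \<and> sublist q p \<and> (sublist q P \<or> sublist (rev q) P)"
  proof
    fix P assume "P \<in> S"
    then obtain x y where xy: "x \<in> V" "y \<in> V" "dist V E x y \<noteq> \<infinity>" "P = \<rho> x y" using step.IH by blast
    from assms(2) ad(1-3) xy(1-3) obtain q where
      "set q = set p \<inter> set P" "sublist q p" "sublist q P \<or> sublist (rev q) P"
      unfolding shortest_path_system_def p_def xy(4) by blast
    then show "\<exists>q. set q = set P \<inter> set p \<and> sublist q p \<and> (sublist q P \<or> sublist (rev q) P)" by blast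
  qed
  have finS: "finite S" using step.IH by blast
  define A where "A = set p - (\<Union>P\<in>S. set P)"
  define Old where "Old = (\<Union>P\<in>S. path_edges P)"
  have c1: "card (path_edges p - Old) \<le> card A + m"
    using step_count[OF finS dp inter ad(4)] by (simp add: A_def Old_def)
  have c2: "m \<le> card A" using fresh_bound[OF assms(3), of p S] ad(5) by (simp add: A_def)
  have "(\<Union>P\<in>insert p S. path_edges P) = Old \<union> (path_edges p - Old)" by (auto simp: Old_def)
  then have "card (\<Union>P\<in>insert p S. path_edges P) \<le> card Old + card (path_edges p - Old)"
    by (metis card_Un_le)
  moreover have "card Old \<le> 2 * card (\<Union>P\<in>S. set P)" using step.IH by (simp add: Old_def)
  moreover have "(\<Union>P\<in>insert p S. set P) = (\<Union>P\<in>S. set P) \<union> A" by (auto simp: A_def)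
  moreover have "card ((\<Union>P\<in>S. set P) \<union> A) = card (\<Union>P\<in>S. set P) + card A"
    using finS by (intro card_Un_disjoint) (auto simp: A_def)
  ultimately have "card (\<Union>P\<in>insert p S. path_edges P) \<le> 2 * card (\<Union>P\<in>insert p S. set P)"
    using c1 c2 by simp
  then show ?case using step.IH ad(1-3) finS by (auto simp: p_def)
qed

theorem lemma1:
  "\<exists>c::real. \<forall>V E \<rho> e d m Cs S.
     graph V E \<and> shortest_path_system V E \<rho> \<and> e \<ge> 1 \<and> d \<ge> 1 \<and> m \<ge> 1 \<and>
     cluster_out V E e Cs \<and> strips_out V E \<rho> Cs d m S \<longrightarrow>
     real (card {ed \<in> (\<Union>p\<in>S. path_edges p). ed \<inter> \<Union>Cs \<noteq> {}}) \<le> c * real (card V)"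
proof (rule exI[of _ 2], intro allI impI, elim conjE)
  fix V E \<rho> e d m Cs S
  assume g: "graph V E" and sps: "shortest_path_system V E \<rho>"
    and co: "cluster_out V E e Cs" and so: "strips_out V E \<rho> Cs d m S"
  have disj: "\<forall>C1\<in>Cs. \<forall>C2\<in>Cs. C1 \<noteq> C2 \<longrightarrow> C1 \<inter> C2 = {}"
    using co cluster_disj unfolding cluster_out_def by blast
  have inv: "finite S" "\<forall>P\<in>S. \<exists>x\<in>V. \<exists>y\<in>V. dist V E x y \<noteq> \<infinity> \<and> P = \<rho> x y"
     "card (\<Union>P\<in>S. path_edges P) \<le> 2 * card (\<Union>P\<in>S. set P)"
    using strips_inv[OF _ sps disj] so by (auto simp: strips_out_def)
  have finV: "finite V" using g by (simp add: graph_def)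
  have sub: "(\<Union>P\<in>S. set P) \<subseteq> V"
  proof
    fix x assume "x \<in> (\<Union>P\<in>S. set P)"
    then obtain P where P: "P \<in> S" "x \<in> set P" by blast
    then obtain a b where "a \<in> V" "b \<in> V" "dist V E a b \<noteq> \<infinity>" "P = \<rho> a b" using inv(2) by blast
    then have "walk V E P" using sps by (auto simp: shortest_path_system_def walk_betw_def)
    then show "x \<in> V" using P by (auto simp: walk_def)
  qed
  have finE: "finite (\<Union>P\<in>S. path_edges P)" using inv(1) finite_path_edges by blast
  have "card {ed \<in> (\<Union>p\<in>S. path_edges p). ed \<inter> \<Union>Cs \<noteq> {}} \<le> card (\<Union>P\<in>S. path_edges P)"
    using finE by (intro card_mono) auto
  also have "\<dots> \<le> 2 * card (\<Union>P\<in>S. set P)" by (rule inv(3))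
  also have "\<dots> \<le> 2 * card V" using card_mono[OF finV sub] by simp
  finally show "real (card {ed \<in> (\<Union>p\<in>S. path_edges p). ed \<inter> \<Union>Cs \<noteq> {}}) \<le> 2 * real (card V)"
    by linarith
qed

end
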